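(* Let $\mathbf{p}:[0,1]\to[0,1]^E$, $\lambda\mapsto\mathbf{p}(\lambda)$, be continuous, and set $\rho(\lambda):=\rho\big(B^T\mathrm{diag}(\mathbf{p}(\lambda))\big)$. Suppose a continuous phase transition occurs at $\lambda_c\in[0,1)$, i.e. $\mathbf{Q}(\mathbf{p}(\lambda))\to\mathbf{1}$ as $\lambda\to\lambda_c$, and there is a sequence $\lambda_n\to\lambda_c$ with $\mathbf{Q}(\mathbf{p}(\lambda_n))\neq\mathbf{1}$ for all $n$. Then $\rho(\lambda_c)\geq 1$.
   Context: $\mathcal{G}=(V,E)$ is a finite directed graph, edges written $i\to j$, $M=|E|$; $\mathcal{N}^-(j)=\{k:\,k\to j\in E\}$ is the set of predecessors of $j$. The Hashimoto matrix is $B_{i\to j,\,k\to l}=\delta_{jk}(1-\delta_{il})$, $\rho$ denotes spectral radius. For $\mathbf{p}\in[0,1]^E$ define $\mathbf{F}(\cdot;\mathbf{p}):[0,1]^E\to[0,1]^E$ componentwise: for the edge $j\to i$, $$F_{j\to i}(\mathbf{y};\mathbf{p})=\prod_{k\in\mathcal{N}^-(j)\setminus\{i\}}\big(1-p_{k\to j}+p_{k\to j}\,y_{k\to j}\big)$$ (empty product $=1$). One checks that the Jacobian at $\mathbf{1}$ is $\mathbf{F}'(\mathbf{1};\mathbf{p})=B^T\mathrm{diag}(\mathbf{p})$. $\mathbf{Q}(\mathbf{p})\in[0,1]^E$ denotes the componentwise smallest fixed point of $\mathbf{F}(\cdot;\mathbf{p})$ in $[0,1]^E$ (the limit of the iterates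 of $\mathbf{F}$ started at $\mathbf{0}$); its component for edge $j\to i$ is the message-passing probability that the cluster obtained by backtracking the edge $j\to i$ is finite. *)

theory Defs
  imports "Jordan_Normal_Form.Spectral_Radius"
begin

text \<open>Directed graph given by a finite edge set E of pairs (i,j), meaning i \<rightarrow> j.
  Vectors in [0,1]^E are functions on pairs; only values on E matter.\<close>

definition edge_list :: "('v \<times> 'v) set \<Rightarrow> ('v \<times> 'v) list" where
  "edge_list E = (SOME xs. distinct xs \<and> set xs = E)"

definition hashimoto :: "('v \<times> 'v) set \<Rightarrow> real mat" where
  "hashimoto E = (let es = edge_list E in
     mat (length es) (length es)
       (\<lambda>(a, b). (case es ! a of (i, j) \<Rightarrow> case es ! b of (k, l) \<Rightarrow>
                    if j = k \<and> i \<noteq> l then 1 else 0)))"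

definition diag_edges :: "('v \<times> 'v) set \<Rightarrow> ('v \<times> 'v \<Rightarrow> real) \<Rightarrow> real mat" where
  "diag_edges E p = (let es = edge_list E in
     mat (length es) (length es) (\<lambda>(a, b). if a = b then p (es ! a) else 0))"

definition rho_B :: "('v \<times> 'v) set \<Rightarrow> ('v \<times> 'v \<Rightarrow> real) \<Rightarrow> real" where
  "rho_B E p = spectral_radius
     (map_mat complex_of_real (transpose_mat (hashimoto E) * diag_edges E p))"

definition F_mp :: "('v \<times> 'v) set \<Rightarrow> ('v \<times> 'v \<Rightarrow> real) \<Rightarrow> ('v \<times> 'v \<Rightarrow> real) \<Rightarrow> ('v \<times> 'v \<Rightarrow> real)" where
  "F_mp E p y = (\<lambda>(j, i). \<Prod>k \<in> {k. (k, j) \<in> E} - {i}.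
       (1 - p (k, j) + p (k, j) * y (k, j)))"

text \<open>Q(p): smallest fixed point of F(.;p) in [0,1]^E, the limit of the iterates of F
  started at 0.\<close>
definition Q_mp :: "('v \<times> 'v) set \<Rightarrow> ('v \<times> 'v \<Rightarrow> real) \<Rightarrow> ('v \<times> 'v \<Rightarrow> real)" where
  "Q_mp E p = (\<lambda>e. lim (\<lambda>n. ((F_mp E p) ^^ n) (\<lambda>_. 0) e))"

end

theory Submission
  imports Defs
begin


lemma F_mono:
  assumes fin: "finite E" and pr: "\<forall>e\<in>E. pv e \<in> {0..1}"
    and uw: "\<And>e. 0 \<le> u e \<and> u e \<le> w e \<and> w e \<le> 1"
  shows "0 \<le> F_mp E pv u x \<and> F_mp E pv u x \<le> F_mp E pv w x \<and> F_mp E pv w x \<le> 1"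
proof -
  obtain j i where x: "x = (j, i)" by fastforce
  let ?S = "{k. (k, j) \<in> E} - {i}"
  have fac: "0 \<le> 1 - pv (k,j) + pv (k,j) * u (k,j) \<and>
        1 - pv (k,j) + pv (k,j) * u (k,j) \<le> 1 - pv (k,j) + pv (k,j) * w (k,j) \<and>
        1 - pv (k,j) + pv (k,j) * w (k,j) \<le> 1" if "k \<in> ?S" for k
  proof -
    have p: "0 \<le> pv (k,j)" "pv (k,j) \<le> 1" using pr that by auto
    have "pv (k,j) * u (k,j) \<le> pv (k,j) * w (k,j)" using p uw by (simp add: mult_left_mono)
    moreover have "pv (k,j) * w (k,j) \<le> pv (k,j)" using p uw by (simp add: mult_left_le)
    moreover have "0 \<le> pv (k,j) * u (k,j)" using p uw by simp
    ultimately show ?thesis using p by linarith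
  qed
  have fac1: "k \<in> ?S \<Longrightarrow> 0 \<le> 1 - pv (k,j) + pv (k,j) * u (k,j)" for k using fac by simp
  have fac2: "k \<in> ?S \<Longrightarrow> 1 - pv (k,j) + pv (k,j) * u (k,j) \<le> 1 - pv (k,j) + pv (k,j) * w (k,j)" for k
    using fac by simp
  have fac3: "k \<in> ?S \<Longrightarrow> 1 - pv (k,j) + pv (k,j) * w (k,j) \<le> 1" for k using fac by simp
  have fac4: "k \<in> ?S \<Longrightarrow> 0 \<le> 1 - pv (k,j) + pv (k,j) * w (k,j)" for k
    using fac1 fac2 by (meson order.trans)
  have "0 \<le> F_mp E pv u x" unfolding F_mp_def x prod.case by (rule prod_nonneg) (rule fac1)
  moreover have "F_mp E pv u x \<le> F_mp E pv w x" unfolding F_mp_def x prod.case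
    by (rule prod_mono) (intro conjI fac1 fac2)
  moreover have "F_mp E pv w x \<le> 1" unfolding F_mp_def x prod.case
    by (rule prod_le_1) (intro conjI fac3 fac4)
  ultimately show ?thesis by (intro conjI)
qed

lemma Q_props:
  assumes fin: "finite E" and pr: "\<forall>e\<in>E. pv e \<in> {0..1}"
  shows "\<And>e. 0 \<le> Q_mp E pv e \<and> Q_mp E pv e \<le> 1" and "F_mp E pv (Q_mp E pv) = Q_mp E pv"
proof -
  define y where "y k = ((F_mp E pv) ^^ k) (\<lambda>_. 0)" for k
  have ys: "y (Suc k) = F_mp E pv (y k)" for k unfolding y_def by simp
  have inv: "\<forall>e. 0 \<le> y k e \<and> y k e \<le> y (Suc k) e \<and> y (Suc k) e \<le> 1" for k
  proof (induction k)
    case 0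
    have "0 \<le> F_mp E pv (\<lambda>_. 0) e \<and> F_mp E pv (\<lambda>_. 0) e \<le> 1" for e
      using F_mono[OF fin pr, of "\<lambda>_. 0" "\<lambda>_. 0" e] by simp
    then show ?case unfolding y_def by simp
  next
    case (Suc k)
    show ?case unfolding ys[of "Suc k"] unfolding ys[of k]
      using F_mono[OF fin pr, of "y k" "F_mp E pv (y k)"] Suc ys by (metis order.trans)
  qed
  have ge0: "0 \<le> y k e" and le1: "y k e \<le> 1" and ymono: "y k e \<le> y (Suc k) e" for k e
  proof -
    show "0 \<le> y k e" using inv[of k] by blast
    show "y k e \<le> y (Suc k) e" using inv[of k] by blast
    show "y k e \<le> 1" using inv[of k] by (meson order.trans)
  qed
  have conv: "(\<lambda>k. y k e) \<longlonglongrightarrow> Q_mp E pv e" for e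
  proof -
    have "incseq (\<lambda>k. y k e)" using inv by (intro incseq_SucI) blast
    moreover have "\<forall>k. y k e \<le> 1" using inv by (meson order.trans)
    ultimately obtain L where "(\<lambda>k. y k e) \<longlonglongrightarrow> L" using incseq_convergent by blast
    hence "convergent (\<lambda>k. y k e)" by (rule convergentI)
    thus ?thesis unfolding Q_mp_def y_def[symmetric] by (simp add: convergent_LIMSEQ_iff)
  qed
  show b: "0 \<le> Q_mp E pv e \<and> Q_mp E pv e \<le> 1" for e
  proof
    show "0 \<le> Q_mp E pv e" by (rule LIMSEQ_le_const[OF conv[of e]]) (use ge0 in blast)
    show "Q_mp E pv e \<le> 1" by (rule LIMSEQ_le_const2[OF conv[of e]]) (use le1 in blast)
  qed
  show "F_mp E pv (Q_mp E pv) = Q_mp E pv"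
  proof
    fix x
    show "F_mp E pv (Q_mp E pv) x = Q_mp E pv x"
    proof -
    obtain j i where x: "x = (j, i)" by fastforce
    have finS: "finite ({k. (k, j) \<in> E} - {i})"
    proof -
      have "{k. (k, j) \<in> E} \<subseteq> fst ` E" by force
      thus ?thesis using fin finite_subset by blast
    qed
    have "(\<lambda>n. F_mp E pv (y n) x) \<longlonglongrightarrow> F_mp E pv (Q_mp E pv) x"
      unfolding F_mp_def x prod.case using finS
      by (intro tendsto_prod tendsto_add tendsto_diff tendsto_mult tendsto_const conv)
    moreover have "(\<lambda>n. F_mp E pv (y n) x) \<longlonglongrightarrow> Q_mp E pv x"
      unfolding ys[symmetric] using conv[of x] by (rule LIMSEQ_Suc)
    ultimately show "F_mp E pv (Q_mp E pv) x = Q_mp E pv x" by (rule LIMSEQ_unique)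
    qed
  qed
qed



lemma prod_ineq:
  fixes x :: "'a \<Rightarrow> real"
  assumes "finite S" "\<forall>k\<in>S. 0 \<le> x k \<and> x k \<le> 1"
  shows "1 - (\<Prod>k\<in>S. 1 - x k) \<le> (\<Sum>k\<in>S. x k)"
  using assms
proof (induction S rule: finite_induct)
  case empty then show ?case by simp
next
  case (insert a S)
  let ?P = "\<Prod>k\<in>S. 1 - x k"
  have P: "0 \<le> ?P" "?P \<le> 1" using insert by (auto intro: prod_nonneg prod_le_1)
  have xa: "0 \<le> x a" "x a \<le> 1" using insert by auto
  have "1 - (1 - x a) * ?P = (1 - ?P) + x a * ?P" by (simp add: algebra_simps)
  also have "\<dots> \<le> (\<Sum>k\<in>S. x k) + x a" using insert P xa
    by (intro add_mono) (auto intro: mult_left_le)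
  finally show ?case using insert by simp
qed

lemma edge_list_props:
  assumes "finite E"
  shows "distinct (edge_list E)" "set (edge_list E) = E"
proof -
  have "\<exists>xs. distinct xs \<and> set xs = E" using finite_distinct_list[OF assms] by metis
  hence "distinct (edge_list E) \<and> set (edge_list E) = E"
    unfolding edge_list_def by (rule someI_ex)
  thus "distinct (edge_list E)" "set (edge_list E) = E" by auto
qed

lemma J_carrier:
  "transpose_mat (hashimoto E) * diag_edges E pv \<in> carrier_mat (length (edge_list E)) (length (edge_list E))"
  unfolding hashimoto_def diag_edges_def Let_def by auto

lemma J_entry:
  assumes "a < length (edge_list E)" "b < length (edge_list E)"
  shows "(transpose_mat (hashimoto E) * diag_edges E pv) $$ (a, b) =
     (if snd (edge_list E ! b) = fst (edge_list E ! a) \<and> fst (edge_list E ! b) \<noteq> snd (edge_list E ! a)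
      then pv (edge_list E ! b) else 0)"
proof -
  let ?es = "edge_list E"
  let ?m = "length ?es"
  let ?H = "\<lambda>c. (case ?es ! c of (i, j) \<Rightarrow> case ?es ! a of (k, l) \<Rightarrow>
                    if j = k \<and> i \<noteq> l then 1 else (0::real))"
  have "(transpose_mat (hashimoto E) * diag_edges E pv) $$ (a, b) =
     (\<Sum>c<?m. ?H c * (if c = b then pv (?es ! c) else 0))"
    using assms unfolding hashimoto_def diag_edges_def Let_def
    by (simp add: scalar_prod_def atLeast0LessThan)
  also have "\<dots> = ?H b * pv (?es ! b)"
    using assms by (simp add: if_distrib sum.delta cong: if_cong)
  finally show ?thesis by (auto split: prod.splits)
qed


lemma sum_edges:
  assumes fin: "finite E"
  shows "(\<Sum>b<length (edge_list E). g (edge_list E ! b)) = (\<Sum>e\<in>E. g e)"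
proof -
  let ?es = "edge_list E"
  have inj: "inj_on (nth ?es) {..<length ?es}"
    using edge_list_props(1)[OF fin] by (intro inj_on_nth) auto
  have "nth ?es ` {..<length ?es} = set ?es" unfolding set_conv_nth by auto
  hence img: "nth ?es ` {..<length ?es} = E" using edge_list_props(2)[OF fin] by simp
  show ?thesis using sum.reindex[OF inj, of g] img by simp
qed

lemma key_ineq:
  assumes fin: "finite E" and pr: "\<forall>e\<in>E. pv e \<in> {0..1}"
    and a: "a < length (edge_list E)"
  shows "1 - Q_mp E pv (edge_list E ! a) \<le>
    (\<Sum>b<length (edge_list E). (transpose_mat (hashimoto E) * diag_edges E pv) $$ (a, b)
         * (1 - Q_mp E pv (edge_list E ! b)))"
proof -
  let ?es = "edge_list E"
  let ?Q = "Q_mp E pv"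
  obtain j i where ji: "?es ! a = (j, i)" by fastforce
  let ?S = "{k. (k, j) \<in> E} - {i}"
  have finS: "finite ?S"
  proof -
    have "{k. (k, j) \<in> E} \<subseteq> fst ` E" by force
    thus ?thesis using fin finite_subset by blast
  qed
  have "?Q (?es ! a) = F_mp E pv ?Q (j, i)" using Q_props(2)[OF fin pr] ji by simp
  also have "\<dots> = (\<Prod>k\<in>?S. 1 - pv (k, j) * (1 - ?Q (k, j)))"
    unfolding F_mp_def by (simp add: algebra_simps)
  finally have Qa: "?Q (?es ! a) = (\<Prod>k\<in>?S. 1 - pv (k, j) * (1 - ?Q (k, j)))" .
  have xs: "\<forall>k\<in>?S. 0 \<le> pv (k, j) * (1 - ?Q (k, j)) \<and> pv (k, j) * (1 - ?Q (k, j)) \<le> 1"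
  proof
    fix k assume "k \<in> ?S"
    hence p: "0 \<le> pv (k,j)" "pv (k,j) \<le> 1" using pr by auto
    have q: "0 \<le> 1 - ?Q (k,j)" "1 - ?Q (k,j) \<le> 1" using Q_props(1)[OF fin pr, of "(k,j)"] by auto
    show "0 \<le> pv (k, j) * (1 - ?Q (k, j)) \<and> pv (k, j) * (1 - ?Q (k, j)) \<le> 1"
      using p q by (simp add: mult_le_one)
  qed
  have "1 - ?Q (?es ! a) \<le> (\<Sum>k\<in>?S. pv (k, j) * (1 - ?Q (k, j)))"
    unfolding Qa by (rule prod_ineq[OF finS xs])
  also have "\<dots> = (\<Sum>e\<in>{e\<in>E. snd e = j \<and> fst e \<noteq> i}. pv e * (1 - ?Q e))"
  proof -
    have inj: "inj_on (\<lambda>k. (k, j)) ?S" by (auto simp: inj_on_def)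
    have img: "(\<lambda>k. (k, j)) ` ?S = {e\<in>E. snd e = j \<and> fst e \<noteq> i}" by force
    show ?thesis using sum.reindex[OF inj, of "\<lambda>e. pv e * (1 - ?Q e)"] img by simp
  qed
  also have "\<dots> = (\<Sum>e\<in>E. if snd e = j \<and> fst e \<noteq> i then pv e * (1 - ?Q e) else 0)"
    by (rule sum.inter_filter[OF fin])
  also have "\<dots> = (\<Sum>b<length ?es. (if snd (?es ! b) = j \<and> fst (?es ! b) \<noteq> i
       then pv (?es ! b) * (1 - ?Q (?es ! b)) else 0))"
    by (rule sum_edges[OF fin, symmetric])
  also have "\<dots> = (\<Sum>b<length ?es. (transpose_mat (hashimoto E) * diag_edges E pv) $$ (a, b)
         * (1 - ?Q (?es ! b)))"
    by (rule sum.cong) (use a ji in \<open>auto simp: J_entry\<close>)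
  finally show ?thesis .
qed



lemma smult_mat_vec: assumes "A \<in> carrier_mat n n" "v \<in> carrier_vec n"
  shows "(k \<cdot>\<^sub>m A) *\<^sub>v v = (k::complex) \<cdot>\<^sub>v (A *\<^sub>v v)"
  using assms by (intro eq_vecI) (auto simp: scalar_prod_def sum_distrib_left ac_simps)

lemma smult_pow: assumes A: "A \<in> carrier_mat n n"
  shows "(k \<cdot>\<^sub>m A) ^\<^sub>m i = ((k::complex)^i) \<cdot>\<^sub>m (A ^\<^sub>m i)"
proof (induction i)
  case 0 then show ?case using A by (auto intro!: eq_matI)
next
  case (Suc i)
  have "(k \<cdot>\<^sub>m A) ^\<^sub>m Suc i = ((k^i) \<cdot>\<^sub>m (A ^\<^sub>m i)) * (k \<cdot>\<^sub>m A)" using Suc by simp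
  also have "\<dots> = (k^i) \<cdot>\<^sub>m ((A ^\<^sub>m i) * (k \<cdot>\<^sub>m A))"
    using A by (intro mult_smult_assoc_mat[of _ n n]) auto
  also have "\<dots> = (k^i) \<cdot>\<^sub>m (k \<cdot>\<^sub>m ((A ^\<^sub>m i) * A))"
    using A by (subst mult_smult_distrib[of _ n n]) auto
  also have "\<dots> = (k^Suc i) \<cdot>\<^sub>m (A ^\<^sub>m Suc i)" by (intro eq_matI) (auto simp: ac_simps)
  finally show ?case .
qed

lemma sr_nonneg: assumes "A \<in> carrier_mat n n" "n > 0" shows "spectral_radius A \<ge> 0"
  using spectral_radius_mem_max(1)[OF assms] by auto

lemma sr_small_pow:
  fixes A :: "real mat"
  assumes A: "A \<in> carrier_mat n n" and n: "n > 0"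
    and sr: "spectral_radius (map_mat complex_of_real A) < 1"
    and eps: "eps > 0"
  shows "\<exists>K. \<forall>a<n. \<forall>b<n. \<bar>(A ^\<^sub>m K) $$ (a, b)\<bar> < eps"
proof -
  define C where "C = map_mat complex_of_real A"
  have C: "C \<in> carrier_mat n n" using A unfolding C_def by auto
  define r where "r = spectral_radius C"
  have r0: "r \<ge> 0" "r < 1" using sr_nonneg[OF C n] sr unfolding r_def C_def by auto
  define s where "s = 2 / (1 + r)"
  have s1: "s > 1" "s * r < 1" using r0 unfolding s_def by (auto simp: field_simps)
  define D where "D = complex_of_real s \<cdot>\<^sub>m C"
  have D: "D \<in> carrier_mat n n" using C unfolding D_def by auto
  have "spectral_radius D < 1"
  proof -
    obtain ev where ev: "ev \<in> spectrum D" and evn: "spectral_radius D = norm ev"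
      using spectral_radius_mem_max(1)[OF D n] by auto
    obtain v where v: "v \<in> carrier_vec n" "v \<noteq> 0\<^sub>v n" "D *\<^sub>v v = ev \<cdot>\<^sub>v v"
      using ev D unfolding spectrum_def eigenvalue_def eigenvector_def by auto
    have "complex_of_real s \<cdot>\<^sub>v (C *\<^sub>v v) = ev \<cdot>\<^sub>v v"
      using v(3) smult_mat_vec[OF C v(1)] unfolding D_def by simp
    note eq = this
    have "C *\<^sub>v v = (ev / complex_of_real s) \<cdot>\<^sub>v v"
    proof (rule eq_vecI)
      fix i assume "i < dim_vec ((ev / complex_of_real s) \<cdot>\<^sub>v v)"
      hence i: "i < n" using v by auto
      have "(complex_of_real s \<cdot>\<^sub>v (C *\<^sub>v v)) $ i = (ev \<cdot>\<^sub>v v) $ i" using eq by simp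
      hence "complex_of_real s * (C *\<^sub>v v) $ i = ev * v $ i" using i C v by simp
      moreover have "complex_of_real s \<noteq> 0" using s1 by simp
      ultimately show "(C *\<^sub>v v) $ i = ((ev / complex_of_real s) \<cdot>\<^sub>v v) $ i"
        using i v by (simp add: field_simps)
    qed (use C v in auto)
    hence "ev / complex_of_real s \<in> spectrum C"
      using v C unfolding spectrum_def eigenvalue_def eigenvector_def by auto
    hence "norm (ev / complex_of_real s) \<le> r"
      using spectral_radius_mem_max(2)[OF C n] unfolding r_def by auto
    hence "norm ev \<le> s * r" using s1 by (simp add: norm_divide field_simps)
    thus ?thesis using s1 evn by simp
  qed
  then obtain c where c: "\<forall>k. norm_bound (D ^\<^sub>m k) c"
    using spectral_radius_jnf_norm_bound_less_1_upper_triangular[OF D] by auto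
  have bound: "\<bar>(A ^\<^sub>m k) $$ (a, b)\<bar> \<le> \<bar>c\<bar> * (1/s)^k" if "a < n" "b < n" for k a b
  proof -
    have "D ^\<^sub>m k = (complex_of_real s ^ k) \<cdot>\<^sub>m map_mat complex_of_real (A ^\<^sub>m k)"
      by (simp only: D_def C_def smult_pow[OF C[unfolded C_def]] of_real_hom.mat_hom_pow[OF A])
    hence "(D ^\<^sub>m k) $$ (a, b) = complex_of_real (s ^ k * (A ^\<^sub>m k) $$ (a, b))"
      using that A by simp
    moreover have "norm ((D ^\<^sub>m k) $$ (a, b)) \<le> c" using c that D unfolding norm_bound_def by auto
    moreover have "norm (complex_of_real (s ^ k * (A ^\<^sub>m k) $$ (a, b))) = s ^ k * \<bar>(A ^\<^sub>m k) $$ (a, b)\<bar>"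
      using s1 by (simp only: norm_of_real abs_mult) simp
    ultimately have "s ^ k * \<bar>(A ^\<^sub>m k) $$ (a, b)\<bar> \<le> c" by simp
    hence "\<bar>(A ^\<^sub>m k) $$ (a, b)\<bar> \<le> c / s ^ k" using s1 by (simp add: field_simps)
    also have "\<dots> \<le> \<bar>c\<bar> * (1/s)^k" using s1 by (simp add: power_one_over divide_right_mono)
    finally show ?thesis .
  qed
  obtain K where K: "(1/s)^K < eps / (\<bar>c\<bar> + 1)"
    using real_arch_pow_inv[of "eps / (\<bar>c\<bar> + 1)" "1/s"] eps s1 by auto
  have "\<bar>c\<bar> * (1/s)^K < eps"
  proof -
    have "\<bar>c\<bar> * (1/s)^K \<le> \<bar>c\<bar> * (eps / (\<bar>c\<bar> + 1))" using K by (intro mult_left_mono) auto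
    also have "\<dots> < eps" using eps by (simp add: field_simps)
    finally show ?thesis .
  qed
  thus ?thesis using bound by (meson le_less_trans)
qed



lemma mult_entry:
  fixes A B :: "'a::comm_semiring_0 mat"
  assumes "A \<in> carrier_mat n n" "B \<in> carrier_mat n n" "a < n" "b < n"
  shows "(A * B) $$ (a, b) = (\<Sum>c<n. A $$ (a, c) * B $$ (c, b))"
  using assms by (simp add: scalar_prod_def atLeast0LessThan)

lemma pow_nonneg:
  fixes A :: "real mat"
  assumes A: "A \<in> carrier_mat n n" and nn: "\<forall>a<n. \<forall>b<n. 0 \<le> A $$ (a, b)"
  shows "a < n \<Longrightarrow> b < n \<Longrightarrow> 0 \<le> (A ^\<^sub>m k) $$ (a, b)"
proof (induction k arbitrary: a b)
  case 0 then show ?case using A by simp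
next
  case (Suc k)
  have "(A ^\<^sub>m Suc k) $$ (a, b) = (A ^\<^sub>m k * A) $$ (a, b)" by simp
  also have "\<dots> = (\<Sum>c<n. (A ^\<^sub>m k) $$ (a, c) * A $$ (c, b))"
    by (rule mult_entry[OF pow_carrier_mat[OF A] A Suc.prems])
  also have "\<dots> \<ge> 0" using Suc nn by (intro sum_nonneg) auto
  finally show ?case .
qed

lemma pow_super:
  fixes A :: "real mat"
  assumes A: "A \<in> carrier_mat n n" and nn: "\<forall>a<n. \<forall>b<n. 0 \<le> A $$ (a, b)"
    and v0: "\<forall>b<n. 0 \<le> v b" and sup: "\<forall>a<n. v a \<le> (\<Sum>b<n. A $$ (a, b) * v b)"
  shows "a < n \<Longrightarrow> v a \<le> (\<Sum>b<n. (A ^\<^sub>m k) $$ (a, b) * v b)"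
proof (induction k arbitrary: a)
  case 0
  have "(\<Sum>b<n. (A ^\<^sub>m 0) $$ (a, b) * v b) = (\<Sum>b<n. (if a = b then v b else 0))"
    using A 0 by (intro sum.cong) auto
  also have "\<dots> = v a" using 0 by simp
  finally show ?case by simp
next
  case (Suc k)
  let ?P = "A ^\<^sub>m k"
  have P: "?P \<in> carrier_mat n n" using A by simp
  have "v a \<le> (\<Sum>c<n. ?P $$ (a, c) * v c)" using Suc by simp
  also have "\<dots> \<le> (\<Sum>c<n. ?P $$ (a, c) * (\<Sum>b<n. A $$ (c, b) * v b))"
  proof (rule sum_mono)
    fix c assume c: "c \<in> {..<n}"
    have "v c \<le> (\<Sum>b<n. A $$ (c, b) * v b)" using sup c by simp
    moreover have "0 \<le> ?P $$ (a, c)" using pow_nonneg[OF A nn Suc.prems, of c k] c by simp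
    ultimately show "?P $$ (a, c) * v c \<le> ?P $$ (a, c) * (\<Sum>b<n. A $$ (c, b) * v b)"
      by (rule mult_left_mono)
  qed
  also have "\<dots> = (\<Sum>c<n. \<Sum>b<n. ?P $$ (a, c) * (A $$ (c, b) * v b))"
    by (simp only: sum_distrib_left)
  also have "\<dots> = (\<Sum>b<n. \<Sum>c<n. ?P $$ (a, c) * (A $$ (c, b) * v b))"
    by (rule sum.swap)
  also have "\<dots> = (\<Sum>b<n. (\<Sum>c<n. ?P $$ (a, c) * A $$ (c, b)) * v b)"
    by (simp only: sum_distrib_right mult.assoc)
  also have "\<dots> = (\<Sum>b<n. (A ^\<^sub>m Suc k) $$ (a, b) * v b)"
    using mult_entry[OF pow_carrier_mat[OF A] A Suc.prems] by (intro sum.cong) auto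
  finally show ?case .
qed

lemma pow_tendsto:
  fixes X :: "nat \<Rightarrow> real mat"
  assumes X: "\<And>i. X i \<in> carrier_mat n n" and Y: "Y \<in> carrier_mat n n"
    and lim: "\<forall>a<n. \<forall>b<n. (\<lambda>i. X i $$ (a, b)) \<longlonglongrightarrow> Y $$ (a, b)"
  shows "a < n \<Longrightarrow> b < n \<Longrightarrow> (\<lambda>i. (X i ^\<^sub>m k) $$ (a, b)) \<longlonglongrightarrow> (Y ^\<^sub>m k) $$ (a, b)"
proof (induction k arbitrary: a b)
  case 0
  have "(\<lambda>i. (X i ^\<^sub>m 0) $$ (a, b)) = (\<lambda>i. (Y ^\<^sub>m 0) $$ (a, b))"
  proof -
    have d: "\<And>i. dim_row (X i) = n" using X by auto
    show ?thesis using Y 0 by (simp add: d)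
  qed
  then show ?case by simp
next
  case (Suc k)
  have e1: "(\<lambda>i. (X i ^\<^sub>m Suc k) $$ (a, b)) = (\<lambda>i. \<Sum>c<n. (X i ^\<^sub>m k) $$ (a, c) * X i $$ (c, b))"
    using mult_entry[OF pow_carrier_mat[OF X] X Suc.prems] by auto
  have e2: "(Y ^\<^sub>m Suc k) $$ (a, b) = (\<Sum>c<n. (Y ^\<^sub>m k) $$ (a, c) * Y $$ (c, b))"
    using mult_entry[OF pow_carrier_mat[OF Y] Y Suc.prems] by auto
  show ?case unfolding e1 e2
    using Suc lim by (intro tendsto_sum tendsto_mult) auto
qed



theorem lemma2:
  fixes V :: "'v set" and E :: "('v \<times> 'v) set"
    and p :: "real \<Rightarrow> ('v \<times> 'v) \<Rightarrow> real"
    and lc :: real and lam :: "nat \<Rightarrow> real"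
  assumes "finite V" and "E \<subseteq> V \<times> V"
    and p_range: "\<forall>l \<in> {0..1}. \<forall>e \<in> E. p l e \<in> {0..1}"
    and p_cont: "\<forall>e \<in> E. continuous_on {0..1} (\<lambda>l. p l e)"
    and lc: "lc \<in> {0..<1}"
    and Q_lim: "\<forall>e \<in> E. ((\<lambda>l. Q_mp E (p l) e) \<longlongrightarrow> 1) (at lc within {0..1})"
    and lam_range: "\<forall>n. lam n \<in> {0..1}"
    and lam_lim: "lam \<longlonglongrightarrow> lc"
    and lam_Q: "\<forall>n. \<exists>e \<in> E. Q_mp E (p (lam n)) e \<noteq> 1"
  shows "rho_B E (p lc) \<ge> 1"
proof (rule ccontr)
  assume nlt: "\<not> rho_B E (p lc) \<ge> 1"
  have finE: "finite E" using assms(1,2) finite_subset by (metis finite_SigmaI)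
  define es where "es = edge_list E"
  define m where "m = length es"
  have setes: "set es = E" unfolding es_def using edge_list_props(2)[OF finE] .
  define J where "J l = transpose_mat (hashimoto E) * diag_edges E (p l)" for l
  have Jc: "J l \<in> carrier_mat m m" for l unfolding J_def m_def es_def by (rule J_carrier)
  have Jent: "J l $$ (a, b) = (if snd (es ! b) = fst (es ! a) \<and> fst (es ! b) \<noteq> snd (es ! a)
      then p l (es ! b) else 0)" if "a < m" "b < m" for l a b
    using J_entry that unfolding J_def m_def es_def by blast
  have esE: "es ! b \<in> E" if "b < m" for b using that setes unfolding m_def by auto
  have lc01: "lc \<in> {0..1}" using lc by auto
  obtain e0 where "e0 \<in> E" using lam_Q by blast
  hence m0: "m > 0" using setes unfolding m_def by (cases es) auto
  have sr: "spectral_radius (map_mat complex_of_real (J lc)) < 1"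
    using nlt unfolding rho_B_def J_def by simp
  obtain K where K: "\<forall>a<m. \<forall>b<m. \<bar>(J lc ^\<^sub>m K) $$ (a, b)\<bar> < 1 / (2 * m)"
    using sr_small_pow[OF Jc m0 sr, of "1 / (2 * m)"] m0 by auto
  have pt: "(\<lambda>n. p (lam n) e) \<longlonglongrightarrow> p lc e" if "e \<in> E" for e
  proof (rule continuous_on_tendsto_compose[of "{0..1}" "\<lambda>l. p l e", OF _ lam_lim lc01])
    show "continuous_on {0..1} (\<lambda>l. p l e)" using p_cont that by blast
    show "\<forall>\<^sub>F n in sequentially. lam n \<in> {0..1}" using lam_range by (simp add: always_eventually)
  qed
  have Jt: "\<forall>a<m. \<forall>b<m. (\<lambda>n. J (lam n) $$ (a, b)) \<longlonglongrightarrow> J lc $$ (a, b)"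
  proof (intro allI impI)
    fix a b assume ab: "a < m" "b < m"
    show "(\<lambda>n. J (lam n) $$ (a, b)) \<longlonglongrightarrow> J lc $$ (a, b)"
    proof (cases "snd (es ! b) = fst (es ! a) \<and> fst (es ! b) \<noteq> snd (es ! a)")
      case True
      show ?thesis unfolding Jent[OF ab] if_P[OF True] by (rule pt[OF esE[OF ab(2)]])
    next
      case False
      show ?thesis unfolding Jent[OF ab] if_not_P[OF False] by (rule tendsto_const)
    qed
  qed
  have ev: "\<forall>\<^sub>F n in sequentially. \<forall>ab\<in>{..<m} \<times> {..<m}.
      (J (lam n) ^\<^sub>m K) $$ ab < 1 / m"
  proof (rule eventually_ball_finite)
    show "finite ({..<m} \<times> {..<m})" by simp
    show "\<forall>ab\<in>{..<m} \<times> {..<m}. \<forall>\<^sub>F n in sequentially. (J (lam n) ^\<^sub>m K) $$ ab < 1 / m"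
    proof
      fix ab assume ab: "ab \<in> {..<m} \<times> {..<m}"
      then obtain a b where abd: "ab = (a, b)" "a < m" "b < m" by auto
      have lim: "(\<lambda>n. (J (lam n) ^\<^sub>m K) $$ (a, b)) \<longlonglongrightarrow> (J lc ^\<^sub>m K) $$ (a, b)"
        using pow_tendsto[OF Jc Jc Jt abd(2,3)] .
      have h: "1 / (2 * real m) < 1 / m" using m0 by (simp add: field_simps)
      have "\<bar>(J lc ^\<^sub>m K) $$ (a, b)\<bar> < 1 / (2 * real m)" using K abd(2,3) by simp
      hence "(J lc ^\<^sub>m K) $$ (a, b) < 1 / m" using h by linarith
      thus "\<forall>\<^sub>F n in sequentially. (J (lam n) ^\<^sub>m K) $$ ab < 1 / m"
        using order_tendstoD(2)[OF lim] abd by auto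
    qed
  qed
  then obtain n where n: "\<forall>a<m. \<forall>b<m. (J (lam n) ^\<^sub>m K) $$ (a, b) < 1 / m"
    unfolding eventually_sequentially by auto
  define pv where "pv = p (lam n)"
  have pr: "\<forall>e\<in>E. pv e \<in> {0..1}" using p_range lam_range unfolding pv_def by auto
  define v where "v b = 1 - Q_mp E pv (es ! b)" for b
  have v0: "\<forall>b<m. 0 \<le> v b" using Q_props(1)[OF finE pr] unfolding v_def by auto
  have Jn: "\<forall>a<m. \<forall>b<m. 0 \<le> J (lam n) $$ (a, b)"
  proof (intro allI impI)
    fix a b assume ab: "a < m" "b < m"
    have "0 \<le> p (lam n) (es ! b)" using pr esE[OF ab(2)] unfolding pv_def by auto
    thus "0 \<le> J (lam n) $$ (a, b)" unfolding Jent[OF ab] by simp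
  qed
  have sup: "\<forall>a<m. v a \<le> (\<Sum>b<m. J (lam n) $$ (a, b) * v b)"
    using key_ineq[OF finE pr] unfolding v_def J_def m_def es_def pv_def by blast
  have supK: "v a \<le> (\<Sum>b<m. (J (lam n) ^\<^sub>m K) $$ (a, b) * v b)" if "a < m" for a
    using pow_super[OF Jc Jn v0 sup that] .
  obtain e where e: "e \<in> E" "Q_mp E pv e \<noteq> 1" using lam_Q unfolding pv_def by blast
  then obtain a0 where a0: "a0 < m" "es ! a0 = e" using setes unfolding m_def
    by (metis in_set_conv_nth)
  have va0: "v a0 > 0" using Q_props(1)[OF finE pr, of e] e a0 unfolding v_def by auto
  define M where "M = Max (v ` {..<m})"
  have Min: "M \<in> v ` {..<m}" unfolding M_def using m0 by (intro Max_in) auto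
  then obtain a where a: "a < m" "v a = M" by auto
  have Mge: "v b \<le> v a" if "b < m" for b using that a(2) Max_ge[of "v ` {..<m}" "v b"] unfolding M_def by auto
  have vapos: "v a > 0" using Mge[OF a0(1)] va0 by simp
  have "v a \<le> (\<Sum>b<m. (J (lam n) ^\<^sub>m K) $$ (a, b) * v b)" by (rule supK[OF a(1)])
  also have "\<dots> \<le> (\<Sum>b<m. (J (lam n) ^\<^sub>m K) $$ (a, b) * v a)"
  proof (rule sum_mono)
    fix b assume b: "b \<in> {..<m}"
    have "v b \<le> v a" using Mge b by simp
    moreover have "0 \<le> (J (lam n) ^\<^sub>m K) $$ (a, b)"
      using pow_nonneg[OF Jc[of "lam n"] Jn a(1), of b K] b by simp
    ultimately show "(J (lam n) ^\<^sub>m K) $$ (a, b) * v b \<le> (J (lam n) ^\<^sub>m K) $$ (a, b) * v a"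
      by (rule mult_left_mono)
  qed
  also have "\<dots> < (\<Sum>b<m. 1 / m * v a)"
  proof (rule sum_strict_mono)
    show "finite {..<m}" by simp
    show "{..<m} \<noteq> {}" using m0 by auto
    fix b assume b: "b \<in> {..<m}"
    have "(J (lam n) ^\<^sub>m K) $$ (a, b) < 1 / m" using n a(1) b by simp
    thus "(J (lam n) ^\<^sub>m K) $$ (a, b) * v a < 1 / m * v a"
      using vapos by (rule mult_strict_right_mono)
  qed
  also have "\<dots> = v a" using m0 by simp
  finally show False by simp
qed


end
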